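(* Let $\gamma:\mathbb{R}/2\pi\mathbb{Z}\to\mathbb{R}^4$, $\gamma(t)=(\cos t,\sin t,\cos 2t,\sin 2t)$, where $\mathbb{R}^4$ carries its standard symplectic structure. Then the outer symplectic billiard correspondence with respect to (the image of) $\gamma$ has no non-degenerate $4$-periodic orbits.
   Context: For a closed curve (1-dimensional submanifold) $M\subset\mathbb{R}^4$ with symplectic form $\omega$, two points $z,z'$ are in outer symplectic billiard correspondence if $Q=\tfrac12(z+z')\in M$ and $\omega(z'-z,\zeta)=0$ for all $\zeta\in T_QM$. A $4$-periodic orbit is a tuple $(z_1,z_2,z_3,z_4)$ with $z_i,z_{i+1}$ in correspondence for $i=1,\dots,4$ (indices mod $4$); it is non-degenerate if there is no $i$ with $z_{i-1}=z_{i+1}$ (indices mod 4). *)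

theory Defs
  imports "HOL-Analysis.Analysis"
begin

definition omega4 :: "real^4 \<Rightarrow> real^4 \<Rightarrow> real" where
  "omega4 u v = u$1 * v$2 - u$2 * v$1 + u$3 * v$4 - u$4 * v$3"

definition gamma :: "real \<Rightarrow> real^4" where
  "gamma t = vector [cos t, sin t, cos (2*t), sin (2*t)]"

definition curveM :: "(real^4) set" where
  "curveM = range gamma"

definition tangent_space :: "real^4 \<Rightarrow> (real^4) set" where
  "tangent_space Q = {c *\<^sub>R vector_derivative gamma (at t) | c t. gamma t = Q}"

definition osb_corr :: "real^4 \<Rightarrow> real^4 \<Rightarrow> bool" where
  "osb_corr z z' \<longleftrightarrow>
     (let Q = (1/2) *\<^sub>R (z + z') in
        Q \<in> curveM \<and> (\<forall>\<zeta>\<in>tangent_space Q. omega4 (z' - z) \<zeta> = 0))"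

end

theory Submission
  imports Defs
begin

lemma gamma_comp:
  "gamma t $ 1 = cos t" "gamma t $ 2 = sin t" "gamma t $ 3 = cos (2*t)" "gamma t $ 4 = sin (2*t)"
  unfolding gamma_def vector_def by simp_all

lemma gamma_eq_iff: "gamma a = gamma b \<longleftrightarrow> cis a = cis b"
proof
  assume "gamma a = gamma b"
  then have "cos a = cos b" "sin a = sin b" by (metis gamma_comp)+
  then show "cis a = cis b" by (simp add: complex_eq_iff)
next
  assume "cis a = cis b"
  then have c: "cos a = cos b" "sin a = sin b" by (metis cis.simps)+
  show "gamma a = gamma b"
    unfolding vec_eq_iff forall_4 gamma_comp
    by (simp add: c sin_double cos_double)
qed

lemma sq: "cis (2*t) = (cis t)^2"
proof -
  have "(cis t)^2 = cis t * cis t" by (rule power2_eq_square)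
  also have "\<dots> = cis (t + t)" by (rule cis_mult)
  also have "t + t = 2*t" by simp
  finally show ?thesis by (rule sym)
qed
lemma cis_key:
  fixes x y p q :: complex
  assumes "x + y = p + q" "x^2 + y^2 = p^2 + q^2"
  shows "x = p \<or> x = q"
proof -
  have i: "2*(x*y) = (x+y)^2 - (x^2+y^2)" "2*(p*q) = (p+q)^2 - (p^2+q^2)" by algebra+
  have "2*(x*y) = 2*(p*q)" using i assms by simp
  then have "x*y = p*q" by simp
  moreover have "(x-p)*(x-q) = x*x - x*(p+q) + p*q" by algebra
  ultimately have "(x-p)*(x-q) = x*x - x*(x+y) + x*y" using assms(1) by simp
  also have "\<dots> = 0" by algebra
  finally show ?thesis by simp
qed
lemma key:
  assumes "gamma a + gamma c = gamma b + gamma d"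
  shows "gamma a = gamma b \<or> gamma c = gamma b"
proof -
  have e: "(gamma a + gamma c) $ i = (gamma b + gamma d) $ i" for i using assms by simp
  have h1: "cis a + cis c = cis b + cis d"
    using e[of 1] e[of 2] by (simp add: complex_eq_iff gamma_comp)
  have h2: "cis (2*a) + cis (2*c) = cis (2*b) + cis (2*d)"
    using e[of 3] e[of 4] by (simp add: complex_eq_iff gamma_comp)
  have h3: "(cis a)^2 + (cis c)^2 = (cis b)^2 + (cis d)^2" using h2 by (simp add: sq)
  from cis_key[OF h1 h3] have "cis a = cis b \<or> cis a = cis d" .
  then show ?thesis
  proof
    assume "cis a = cis b" then show ?thesis by (simp add: gamma_eq_iff)
  next
    assume "cis a = cis d"
    then have "cis c = cis b" using h1 by simp
    then show ?thesis by (simp add: gamma_eq_iff)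
  qed
qed

lemma corr_mid: "osb_corr z z' \<Longrightarrow> \<exists>t. z + z' = 2 *\<^sub>R gamma t"
proof -
  assume "osb_corr z z'"
  then obtain t where "(1/2) *\<^sub>R (z + z') = gamma t"
    unfolding osb_corr_def curveM_def Let_def by auto
  then have "2 *\<^sub>R ((1/2) *\<^sub>R (z + z')) = 2 *\<^sub>R gamma t" by simp
  then show ?thesis by auto
qed

theorem mainTheorem6:
  shows "\<not> (\<exists>z1 z2 z3 z4 :: real^4.
            osb_corr z1 z2 \<and> osb_corr z2 z3 \<and> osb_corr z3 z4 \<and> osb_corr z4 z1 \<and>
            z4 \<noteq> z2 \<and> z1 \<noteq> z3 \<and> z2 \<noteq> z4 \<and> z3 \<noteq> z1)"
proof
  assume "\<exists>z1 z2 z3 z4 :: real^4.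
            osb_corr z1 z2 \<and> osb_corr z2 z3 \<and> osb_corr z3 z4 \<and> osb_corr z4 z1 \<and>
            z4 \<noteq> z2 \<and> z1 \<noteq> z3 \<and> z2 \<noteq> z4 \<and> z3 \<noteq> z1"
  then obtain z1 z2 z3 z4 :: "real^4" where
    c: "osb_corr z1 z2" "osb_corr z2 z3" "osb_corr z3 z4" "osb_corr z4 z1"
    and n: "z1 \<noteq> z3" "z2 \<noteq> z4" by blast
  obtain a where a: "z1 + z2 = 2 *\<^sub>R gamma a" using corr_mid[OF c(1)] by blast
  obtain b where b: "z2 + z3 = 2 *\<^sub>R gamma b" using corr_mid[OF c(2)] by blast
  obtain cc where cc: "z3 + z4 = 2 *\<^sub>R gamma cc" using corr_mid[OF c(3)] by blast
  obtain d where d: "z4 + z1 = 2 *\<^sub>R gamma d" using corr_mid[OF c(4)] by blast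
  have s1: "2 *\<^sub>R (gamma a + gamma cc) = (z1+z2)+(z3+z4)" using a cc by (simp add: scaleR_add_right)
  have s2: "2 *\<^sub>R (gamma b + gamma d) = (z2+z3)+(z4+z1)" using b d by (simp add: scaleR_add_right)
  have s3: "(z1+z2)+(z3+z4) = (z2+z3)+(z4+z1)" by (simp add: ac_simps)
  have "2 *\<^sub>R (gamma a + gamma cc) = 2 *\<^sub>R (gamma b + gamma d)"
    using s1 s2 s3 by simp
  then have "gamma a + gamma cc = gamma b + gamma d" by simp
  from key[OF this] show False
  proof
    assume "gamma a = gamma b"
    then have "z1 + z2 = z2 + z3" using a b by simp
    then show False using n by simp
  next
    assume "gamma cc = gamma b"
    then have "z3 + z4 = z2 + z3" using cc b by simp
    then show False using n by (simp add: add.commute)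
  qed
qed

end
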